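(* Let $L$ be a free $\mathbb Z_{q,\pi}$-module with basis $\{v_i\}_{i\in I}$ and a nondegenerate symmetric sesquilinear form with $\langle i,j\rangle:=\langle v_i,v_j\rangle$, and suppose that for each $i,j\in I$ there is a finite-dimensional $\mathbb Z$-graded super vector space $V_{ij}$ with $\mathrm{grdim}\,V_{ij}=\langle i,j\rangle$. Then the lattice Heisenberg algebra $\mathfrak h_L$ is generated by the complete symmetric functions $h^\pm_{n,i}$, $n\ge1$, $i\in I$, subject to the relations \[ [h^+_{n,i},h^+_{m,j}]=0,\qquad [h^-_{n,i},h^-_{m,j}]=0,\qquad h^+_{n,i}h^-_{m,j}=\sum_{r=0}^{\min(n,m)}\mathrm{grdim}\,S^r(V_{ij})\,h^-_{m-r,j}h^+_{n-r,i} \] for all $n,m\ge1$, $i,j\in I$ (with $h^\pm_{0,i}=1$).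
   Context: $\mathbb F$ is an algebraically closed field of characteristic $0$; $\mathbb Z_{q,\pi}=\mathbb Z[q,q^{-1},\pi]/(\pi^2-1)$, $\mathbb F_{q,\pi}=\mathbb F[q,q^{-1},\pi]/(\pi^2-1)$. A form $L\times L\to\mathbb Z_{q,\pi}$ is sesquilinear if it is $\mathbb Z$-bilinear and $\langle v,q^s\pi^\epsilon w\rangle=q^s\pi^\epsilon\langle v,w\rangle=\langle q^{-s}\pi^\epsilon v,w\rangle$. For a $\mathbb Z\times\mathbb Z_2$-graded vector space $V$, $\mathrm{grdim}V=\sum_{s\in\mathbb Z,\epsilon\in\mathbb Z_2}q^s\pi^\epsilon\dim V_{s,\epsilon}$; $S^r(V)$ is the $r$-th super symmetric power (symmetric on the even part, exterior on the odd part), with the induced grading. For $n\in\mathbb Z$, $\theta_n\colon\mathbb F_{q,\pi}\to\mathbb F_{q,\pi}$ is the $\mathbb F$-algebra map $q\mapsto q^n$, $\pi\mapsto-(-\pi)^n$. The lattice Heisenberg algebra $\mathfrak h_L$ is the $\mathbb F_{q,\pi}$-algebra generated by $p^\pm_{n,i}$ ($n\ge1$, $i\in I$) with relations $[p^+_{n,i},p^+_{m,j}]=0$, $[p^-_{n,i},p^-_{m,j}]=0$, $[p^+_{n,i},p^-_{m,j}]=\delta_{n,m}\,n\,\theta_n(\langle i,j\rangle)$. For a symmetric function $f$, $f^\pm_i$ denotes the image of $f$ under the algebra map from symmetric functions over $\mathbb F_{q,\pi}$ sending the power sum $p_n$ to $p^\pm_{n,i}$; $h_n$ is the complete homogeneous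 symmetric function. *)

theory Defs
  imports "HOL-Library.Poly_Mapping" "HOL-Library.Z2" "HOL-Library.Product_Plus"
          "HOL-Library.Multiset" "HOL-Computational_Algebra.Polynomial"
begin

text \<open>Z[q,q^-1,pi]/(pi^2-1) is the group ring of Z x Z_2 over Z; the monomial q^s pi^e
  corresponds to the key (s,e).  Multiplication on poly_mapping is convolution.\<close>

type_synonym Zqpi = "(int \<times> bit) \<Rightarrow>\<^sub>0 int"
type_synonym 'f Fqpi = "(int \<times> bit) \<Rightarrow>\<^sub>0 'f"

definition qmon :: "int \<Rightarrow> bit \<Rightarrow> (int \<times> bit) \<Rightarrow>\<^sub>0 ('r::zero_neq_one)" where
  "qmon s e = Poly_Mapping.single (s, e) 1"

definition piF :: "(int \<times> bit) \<Rightarrow>\<^sub>0 ('r::zero_neq_one)" where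
  "piF = qmon 0 1"

definition toF :: "Zqpi \<Rightarrow> ('f::ring_1) Fqpi" where
  "toF c = Poly_Mapping.map of_int c"

definition bar :: "Zqpi \<Rightarrow> Zqpi" where
  "bar c = Abs_poly_mapping (\<lambda>(s, e). Poly_Mapping.lookup c (- s, e))"

text \<open>theta_n : q -> q^n, pi -> -(-pi)^n, as F-algebra map (on the basis q^s pi^e).\<close>
definition theta :: "nat \<Rightarrow> ('f::comm_ring_1) Fqpi \<Rightarrow> 'f Fqpi" where
  "theta n c = (\<Sum>k\<in>Poly_Mapping.keys c. Poly_Mapping.single (0, 0) (Poly_Mapping.lookup c k)
        * qmon (int n * fst k) 0
        * (- ((- piF) ^ n)) ^ (if snd k = 1 then 1 else 0))"

text \<open>A finite-dimensional Z x Z_2-graded vector space is described (up to isomorphism)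
  by its graded dimension function d: d (s,e) = dim V_{s,e}.  We fix the homogeneous basis
  {(k,t). k in keys d, t < d k}, the basis vector (k,t) having degree k.\<close>

type_synonym sdim = "(int \<times> bit) \<Rightarrow>\<^sub>0 nat"

definition sbasis :: "sdim \<Rightarrow> ((int \<times> bit) \<times> nat) set" where
  "sbasis d = {(k, t). t < Poly_Mapping.lookup d k}"

definition grdim :: "sdim \<Rightarrow> Zqpi" where
  "grdim d = (\<Sum>b\<in>sbasis d. qmon (fst (fst b)) (snd (fst b)))"

text \<open>Basis of the super symmetric power S^r(V): multisets of size r of basis vectors in
  which odd basis vectors occur at most once (symmetric on even, exterior on odd part);
  the degree of a monomial is the sum of the degrees.\<close>
definition sym_basis :: "sdim \<Rightarrow> nat \<Rightarrow> ((int \<times> bit) \<times> nat) multiset set" where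
  "sym_basis d r = {m. set_mset m \<subseteq> sbasis d \<and> size m = r \<and>
                      (\<forall>b. snd (fst b) = 1 \<longrightarrow> count m b \<le> 1)}"

definition grdim_sym :: "sdim \<Rightarrow> nat \<Rightarrow> Zqpi" where
  "grdim_sym d r = (\<Sum>m\<in>sym_basis d r.
      Poly_Mapping.single (sum_mset (image_mset fst m)) 1)"

text \<open>L = free Z_{q,pi}-module on I; an element is a finitely supported coefficient
  function a :: 'i =>0 Z_{q,pi}.  A sesquilinear form is determined by its Gram
  matrix G i j = <v_i, v_j>: <sum a_i v_i, sum b_j v_j> = sum bar(a_i) b_j G i j.\<close>

definition sform :: "('i \<Rightarrow> 'i \<Rightarrow> Zqpi) \<Rightarrow> ('i \<Rightarrow>\<^sub>0 Zqpi) \<Rightarrow> ('i \<Rightarrow>\<^sub>0 Zqpi) \<Rightarrow> Zqpi" where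
  "sform G a b = (\<Sum>i\<in>Poly_Mapping.keys a. \<Sum>j\<in>Poly_Mapping.keys b. bar (Poly_Mapping.lookup a i) * Poly_Mapping.lookup b j * G i j)"

definition symmetric_form :: "('i \<Rightarrow> 'i \<Rightarrow> Zqpi) \<Rightarrow> bool" where
  "symmetric_form G \<longleftrightarrow> (\<forall>a b. sform G b a = bar (sform G a b))"

definition nondegenerate_form :: "('i \<Rightarrow> 'i \<Rightarrow> Zqpi) \<Rightarrow> bool" where
  "nondegenerate_form G \<longleftrightarrow> (\<forall>a. (\<forall>b. sform G a b = 0) \<longrightarrow> a = 0)"

text \<open>An F_{q,pi}-algebra structure on a ring 'a: a unital ring homomorphism into the centre.\<close>
definition central_alg :: "('f::comm_ring_1 Fqpi \<Rightarrow> 'a::ring_1) \<Rightarrow> bool" where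
  "central_alg emb \<longleftrightarrow> emb 1 = 1 \<and> (\<forall>x y. emb (x + y) = emb x + emb y)
     \<and> (\<forall>x y. emb (x * y) = emb x * emb y) \<and> (\<forall>x a. emb x * a = a * emb x)"

text \<open>Families P s n i with s = True for +, s = False for -, defined for n >= 1.
  Normalisation: P s 0 i = 0 (power sums), H s 0 i = 1 (complete symmetric functions).\<close>

definition heis_rel :: "('f::field_char_0 Fqpi \<Rightarrow> 'a::ring_1) \<Rightarrow> ('i \<Rightarrow> 'i \<Rightarrow> Zqpi)
     \<Rightarrow> (bool \<Rightarrow> nat \<Rightarrow> 'i \<Rightarrow> 'a) \<Rightarrow> bool" where
  "heis_rel emb G P \<longleftrightarrow> (\<forall>s i. P s 0 i = 0) \<and>
     (\<forall>s n m i j. n \<ge> 1 \<longrightarrow> m \<ge> 1 \<longrightarrow> P s n i * P s m j = P s m j * P s n i) \<and>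
     (\<forall>n m i j. n \<ge> 1 \<longrightarrow> m \<ge> 1 \<longrightarrow>
        P True n i * P False m j - P False m j * P True n i =
        (if n = m then emb (of_nat n * theta n (toF (G i j))) else 0))"

text \<open>Image of h_n under the algebra map from symmetric functions sending p_k to X k:
  h_0 = 1 and Newton's identity n h_n = sum_{k=1}^n p_k h_{n-k}.\<close>
function hfun :: "('f::field_char_0 Fqpi \<Rightarrow> 'a::ring_1) \<Rightarrow> (nat \<Rightarrow> 'a) \<Rightarrow> nat \<Rightarrow> 'a" where
  "hfun emb X n = (if n = 0 then 1 else
      emb (Poly_Mapping.single (0, 0) (inverse (of_nat n))) *
        (\<Sum>k\<in>{1..n}. X k * hfun emb X (n - k)))"
  by auto
termination by (relation "measure (\<lambda>(_, _, n). n)") auto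

definition hrel :: "('f::field_char_0 Fqpi \<Rightarrow> 'a::ring_1) \<Rightarrow> ('i \<Rightarrow> 'i \<Rightarrow> sdim)
     \<Rightarrow> (bool \<Rightarrow> nat \<Rightarrow> 'i \<Rightarrow> 'a) \<Rightarrow> bool" where
  "hrel emb V H \<longleftrightarrow> (\<forall>s i. H s 0 i = 1) \<and>
     (\<forall>s n m i j. n \<ge> 1 \<longrightarrow> m \<ge> 1 \<longrightarrow> H s n i * H s m j = H s m j * H s n i) \<and>
     (\<forall>n m i j. n \<ge> 1 \<longrightarrow> m \<ge> 1 \<longrightarrow>
        H True n i * H False m j =
        (\<Sum>r\<in>{0..min n m}. emb (toF (grdim_sym (V i j) r)) * H False (m - r) j * H True (n - r) i))"

definition p_to_h :: "('f::field_char_0 Fqpi \<Rightarrow> 'a::ring_1) \<Rightarrow> (bool \<Rightarrow> nat \<Rightarrow> 'i \<Rightarrow> 'a)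
     \<Rightarrow> (bool \<Rightarrow> nat \<Rightarrow> 'i \<Rightarrow> 'a)" where
  "p_to_h emb P = (\<lambda>s n i. hfun emb (\<lambda>k. P s k i) n)"

definition alg_closed :: "'f::field itself \<Rightarrow> bool" where
  "alg_closed _ \<longleftrightarrow> (\<forall>p::'f poly. degree p \<ge> 1 \<longrightarrow> (\<exists>x. poly p x = 0))"

end

theory Submission
  imports Defs "HOL-Computational_Algebra.Formal_Power_Series"
begin

unbundle fps_syntax


definition NN :: "'a::ring_1 fps \<Rightarrow> 'a fps" where
  "NN f = Abs_fps (\<lambda>n. of_nat n * f $ n)"

lemma NN_nth[simp]: "NN f $ n = of_nat n * f $ n"
  by (simp add: NN_def)

lemma NN_0[simp]: "NN 0 = 0"
  by (rule fps_ext) simp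

lemma NN_add: "NN (f + g) = NN f + NN g"
  by (rule fps_ext) (simp add: algebra_simps)
lemma NN_diff: "NN (f - g) = NN f - NN g"
  by (rule fps_ext) (simp add: algebra_simps)

lemma NN_mult: "NN (f * g) = NN f * g + f * NN (g::'a::ring_1 fps)"
proof (rule fps_ext)
  fix n
  have "NN (f * g) $ n = (\<Sum>i=0..n. of_nat n * (f$i * g$(n - i)))"
    by (simp add: fps_mult_nth sum_distrib_left)
  also have "\<dots> = (\<Sum>i=0..n. (of_nat i * f$i) * g$(n-i) + f$i * (of_nat (n-i) * g$(n-i)))"
  proof (rule sum.cong[OF refl])
    fix i assume "i \<in> {0..n}"
    then have "of_nat n = (of_nat i + of_nat (n-i) :: 'a)" by (simp flip: of_nat_add)
    then show "of_nat n * (f$i * g$(n - i)) = (of_nat i * f$i) * g$(n-i) + f$i * (of_nat (n-i) * g$(n-i))"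
      by (simp add: algebra_simps mult_of_nat_commute)
  qed
  also have "\<dots> = (NN f * g + f * NN g) $ n"
    by (simp add: fps_mult_nth sum.distrib)
  finally show "NN (f * g) $ n = (NN f * g + f * NN g) $ n" .
qed

lemma NN_const[simp]: "NN (fps_const c) = 0"
  by (rule fps_ext) simp

lemma NN_X_power: "NN (fps_X ^ k :: 'a::ring_1 fps) = of_nat k * fps_X ^ k"
  by (rule fps_ext) (simp flip: fps_of_nat)

lemma fps_const_sum: "fps_const (sum f S) = (\<Sum>x\<in>S. fps_const (f x))"
  by (rule fps_ext) (simp add: fps_sum_nth)

lemma inv_lemma:
  fixes E D K B :: "'a::ring_1 fps"
  assumes eq: "NN E = D * K + B * E" and K0: "K$0 = 1" and B0: "B$0 = 0" and E0: "E$0 = 0"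
    and nz: "\<And>m (x::'a). m > 0 \<Longrightarrow> of_nat m * x = 0 \<Longrightarrow> x = 0"
  shows "D = 0 \<longleftrightarrow> E = 0"
proof
  assume D: "D = 0"
  have "E $ m = 0" for m
  proof (induction m rule: less_induct)
    case (less m)
    show ?case
    proof (cases "m = 0")
      case True then show ?thesis using E0 by simp
    next
      case False
      have "of_nat m * E $ m = (B * E) $ m" using arg_cong[OF eq, of "\<lambda>f. f $ m"] D by simp
      also have "\<dots> = (\<Sum>i=0..m. B$i * E$(m - i))" by (rule fps_mult_nth)
      also have "\<dots> = 0"
      proof (rule sum.neutral, rule ballI)
        fix i assume "i \<in> {0..m}"
        then show "B$i * E$(m - i) = 0" using B0 less False by (cases "i = 0") auto
      qed
      finally show ?thesis using nz False by blast
    qed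
  qed
  then show "E = 0" by (intro fps_ext) simp
next
  assume E: "E = 0"
  then have DK: "D * K = 0" using eq by simp
  have "D $ m = 0" for m
  proof (induction m rule: less_induct)
    case (less m)
    have "0 = (D * K) $ m" using DK by simp
    also have "\<dots> = (\<Sum>i=0..m. D$i * K$(m - i))" by (rule fps_mult_nth)
    also have "\<dots> = (\<Sum>i\<in>insert m {0..<m}. D$i * K$(m - i))"
      by (rule sum.cong) auto
    also have "\<dots> = D $ m" using less K0 by (simp add: sum.insert)
    finally show ?case by simp
  qed
  then show "D = 0" by (intro fps_ext) simp
qed

lemma tri_swap:
  fixes f :: "nat \<Rightarrow> nat \<Rightarrow> 'b::comm_monoid_add"
  shows "(\<Sum>l\<le>n. \<Sum>r\<le>n-l. f l r) = (\<Sum>r\<le>n. \<Sum>l\<le>n-r. f l r)"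
proof -
  have "(\<Sum>l\<le>n. \<Sum>r\<le>n-l. f l r) = (\<Sum>(l,r)\<in>Sigma {..n} (\<lambda>l. {..n-l}). f l r)"
    by (simp add: sum.Sigma)
  also have "\<dots> = (\<Sum>(r,l)\<in>Sigma {..n} (\<lambda>r. {..n-r}). f l r)"
    by (rule sum.reindex_bij_witness[where i="\<lambda>(r,l). (l,r)" and j="\<lambda>(l,r). (r,l)"]) auto
  also have "\<dots> = (\<Sum>r\<le>n. \<Sum>l\<le>n-r. f l r)"
    by (simp add: sum.Sigma)
  finally show ?thesis .
qed

lemma tri_diag:
  fixes f :: "nat \<Rightarrow> nat \<Rightarrow> 'b::comm_monoid_add"
  shows "(\<Sum>l\<le>n. \<Sum>r\<le>n-l. f l r) = (\<Sum>s\<le>n. \<Sum>l\<le>s. f l (s - l))"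
proof -
  have "(\<Sum>l\<le>n. \<Sum>r\<le>n-l. f l r) = (\<Sum>(l,r)\<in>Sigma {..n} (\<lambda>l. {..n-l}). f l r)"
    by (simp add: sum.Sigma)
  also have "Sigma {..n} (\<lambda>l. {..n-l}) = {(i,j). i+j \<le> n}" by auto
  also have "(\<Sum>(l,r)\<in>{(i,j). i+j \<le> n}. f l r) = (\<Sum>s\<le>n. \<Sum>l\<le>s. f l (s - l))"
    by (rule sum.triangle_reindex_eq)
  finally show ?thesis .
qed



lemma cst_central: fixes c :: "'a::ring_1" assumes "\<And>x. c * x = x * c" shows "fps_const c * f = f * fps_const c"
proof (rule fps_ext)
  fix n show "(fps_const c * f) $ n = (f * fps_const c) $ n" using assms[of "f $ n"] by simp
qed

locale core =
  fixes a b C g h k :: "nat \<Rightarrow> 'a::ring_1"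
  assumes a0: "a 0 = 0" and b0: "b 0 = 0" and g0: "g 0 = 0" and C0: "C 0 = 1"
    and h0: "h 0 = 1" and k0: "k 0 = 1"
    and Ccent: "\<And>r x. C r * x = x * C r" and gcent: "\<And>l x. g l * x = x * g l"
    and Cnewton: "\<And>r. of_nat r * C r = (\<Sum>l\<le>r. g l * C (r - l))"
    and hnewton: "\<And>n. of_nat n * h n = (\<Sum>l\<le>n. a l * h (n - l))"
    and knewton: "\<And>m. of_nat m * k m = (\<Sum>l\<le>m. b l * k (m - l))"
    and nz: "\<And>m (x::'a). m > 0 \<Longrightarrow> of_nat m * x = 0 \<Longrightarrow> x = 0"
begin

definition "KK = Abs_fps k"
definition "BB = Abs_fps b"
definition "Dn n = fps_const (a n) * BB - BB * fps_const (a n) - fps_const (of_nat n * g n) * fps_X ^ n"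
definition "En n = fps_const (a n) * KK - KK * fps_const (a n) - fps_const (g n) * fps_X ^ n * KK"
definition "Fn n = fps_const (h n) * KK - (\<Sum>r\<le>n. fps_const (C r) * fps_X ^ r * KK * fps_const (h (n - r)))"

lemma NN_KK: "NN KK = BB * KK"
proof (rule fps_ext)
  fix m
  show "NN KK $ m = (BB * KK) $ m"
    using knewton[of m] by (simp add: KK_def BB_def fps_mult_nth atLeast0AtMost)
qed

lemma Ccst: "fps_const (C r) * f = f * fps_const (C r)"
  by (rule cst_central) (rule Ccent)
lemma gcst: "fps_const (g r) * f = f * fps_const (g r)"
  by (rule cst_central) (rule gcent)

lemma E_id: "NN (En n) = Dn n * KK + BB * En n"
proof -
  have c1: "BB * fps_const (g n) = fps_const (g n) * BB" by (simp add: gcst)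
  have c2: "BB * fps_X ^ n = fps_X ^ n * BB" by (simp add: fps_mult_fps_X_power_commute)
  have on: "fps_const (of_nat n * g n) = (of_nat n :: 'a fps) * fps_const (g n)"
    by (simp flip: fps_of_nat)
  have "NN (En n) = fps_const (a n) * (BB * KK) - BB * KK * fps_const (a n)
      - fps_const (g n) * (of_nat n * fps_X ^ n * KK + fps_X ^ n * (BB * KK))"
    unfolding En_def NN_diff NN_mult NN_KK NN_X_power NN_const by (simp add: algebra_simps)
  also have "\<dots> = fps_const (a n) * BB * KK - BB * KK * fps_const (a n)
      - of_nat n * fps_const (g n) * fps_X ^ n * KK - fps_const (g n) * fps_X ^ n * BB * KK"
    by (simp add: algebra_simps mult_of_nat_commute)
  also have "fps_const (g n) * fps_X ^ n * BB * KK = BB * fps_const (g n) * fps_X ^ n * KK"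
    using c1 c2 by (metis mult.assoc)
  also have "fps_const (a n) * BB * KK - BB * KK * fps_const (a n)
      - of_nat n * fps_const (g n) * fps_X ^ n * KK - BB * fps_const (g n) * fps_X ^ n * KK
      = Dn n * KK + BB * En n"
    by (simp add: Dn_def En_def on algebra_simps)
  finally show ?thesis .
qed

lemma En0: "En n $ 0 = 0"
  using g0 by (cases "n = 0") (simp_all add: En_def KK_def k0)

lemma D_iff_E: "Dn n = 0 \<longleftrightarrow> En n = 0"
  by (rule inv_lemma[OF E_id]) (simp_all add: KK_def BB_def k0 b0 En0 nz)

end


lemma ofnat_mid: "(x::'b::ring_1) * (of_nat m * y) = of_nat m * (x * y)"
  by (metis mult.assoc mult_of_nat_commute)

lemma comb_lemma: "(x::'b::ab_group_add) = p - (e + q) \<Longrightarrow> y = p - q \<Longrightarrow> y = x + e"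
  by simp

context core begin

lemma A3: "fps_const (a l) * (fps_const (C r) * fps_X ^ r * KK * fps_const hh)
   = fps_const (C r) * fps_X ^ r * En l * fps_const hh
   + fps_const (C r) * fps_X ^ r * KK * (fps_const (a l) * fps_const hh)
   + fps_const (g l * C r) * fps_X ^ (l + r) * KK * fps_const hh"
proof -
  have "fps_const (a l) * (fps_const (C r) * fps_X ^ r * KK * fps_const hh)
     = fps_const (C r) * fps_X ^ r * (fps_const (a l) * KK) * fps_const hh"
  proof -
    have "fps_const (a l) * fps_const (C r) * fps_X ^ r = fps_const (C r) * fps_X ^ r * fps_const (a l)"
    proof -
      have c: "fps_const (a l) * fps_const (C r) = fps_const (C r) * fps_const (a l)" by (rule Ccst[symmetric])
      have x: "fps_const (a l) * fps_X^r = fps_X^r * fps_const (a l)" by (rule fps_mult_fps_X_power_commute[symmetric])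
      show ?thesis by (simp only: c mult.assoc x)
    qed
    note q = this
    show ?thesis by (simp only: mult.assoc[symmetric] q)
  qed
  also have "fps_const (a l) * KK = En l + KK * fps_const (a l) + fps_const (g l) * fps_X ^ l * KK"
    by (simp add: En_def algebra_simps)
  also have "fps_const (C r) * fps_X ^ r * (En l + KK * fps_const (a l) + fps_const (g l) * fps_X ^ l * KK) * fps_const hh
     = fps_const (C r) * fps_X ^ r * En l * fps_const hh
   + fps_const (C r) * fps_X ^ r * KK * (fps_const (a l) * fps_const hh)
   + fps_const (C r) * fps_X ^ r * (fps_const (g l) * fps_X ^ l * KK) * fps_const hh"
    by (simp add: algebra_simps)
  also have "fps_const (C r) * fps_X ^ r * (fps_const (g l) * fps_X ^ l * KK)
      = fps_const (g l * C r) * fps_X ^ (l + r) * KK"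
  proof -
    have "fps_const (C r) * fps_X ^ r * (fps_const (g l) * fps_X ^ l * KK)
        = fps_const (g l) * (fps_const (C r) * fps_X ^ r) * fps_X ^ l * KK"
    proof -
      have gg: "fps_const (g l) * fps_const (C r) * fps_X ^ r = fps_const (C r) * fps_X ^ r * fps_const (g l)"
        using gcst[of l "fps_const (C r) * fps_X ^ r"] by (simp only: mult.assoc)
      show ?thesis by (simp only: mult.assoc[symmetric] gg)
    qed
    also have "\<dots> = fps_const (g l * C r) * (fps_X ^ r * fps_X ^ l) * KK"
      by (simp add: mult.assoc flip: fps_const_mult)
    also have "\<dots> = fps_const (g l * C r) * fps_X ^ (l + r) * KK"
      by (simp flip: power_add add: add.commute)
    finally show ?thesis .
  qed
  finally show ?thesis by (simp add: mult.assoc)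
qed

lemma F_id: "of_nat n * Fn n = (\<Sum>l\<le>n. fps_const (a l) * Fn (n - l))
   + (\<Sum>l\<le>n. \<Sum>r\<le>n - l. fps_const (C r) * fps_X ^ r * En l * fps_const (h (n - l - r)))"
proof -
  let ?E = "(\<Sum>l\<le>n. \<Sum>r\<le>n - l. fps_const (C r) * fps_X ^ r * En l * fps_const (h (n - l - r)))"
  let ?T3 = "(\<Sum>l\<le>n. \<Sum>r\<le>n - l. fps_const (C r) * fps_X ^ r * KK * (fps_const (a l) * fps_const (h (n - l - r))))"
  let ?T4 = "(\<Sum>l\<le>n. \<Sum>r\<le>n - l. fps_const (g l * C r) * fps_X ^ (l + r) * KK * fps_const (h (n - l - r)))"
  have A1: "(\<Sum>l\<le>n. fps_const (a l) * Fn (n - l)) = (\<Sum>l\<le>n. fps_const (a l) * fps_const (h (n - l)) * KK)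
     - (\<Sum>l\<le>n. \<Sum>r\<le>n - l. fps_const (a l) * (fps_const (C r) * fps_X ^ r * KK * fps_const (h (n - l - r))))"
    by (simp add: Fn_def algebra_simps sum_subtractf sum_distrib_left del: fps_const_mult)
  have A2: "(\<Sum>l\<le>n. fps_const (a l) * fps_const (h (n - l)) * KK) = of_nat n * fps_const (h n) * KK"
  proof -
    have "(\<Sum>l\<le>n. fps_const (a l) * fps_const (h (n - l)) * KK) = fps_const (\<Sum>l\<le>n. a l * h (n - l)) * KK"
      by (simp add: fps_const_sum sum_distrib_right)
    also have "\<dots> = of_nat n * fps_const (h n) * KK" by (simp flip: hnewton fps_of_nat)
    finally show ?thesis .
  qed
  have A3s: "(\<Sum>l\<le>n. \<Sum>r\<le>n - l. fps_const (a l) * (fps_const (C r) * fps_X ^ r * KK * fps_const (h (n - l - r))))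
     = ?E + ?T3 + ?T4"
    by (simp add: A3 sum.distrib)
  have A4: "?T3 = (\<Sum>r\<le>n. fps_const (C r) * fps_X ^ r * KK * (of_nat (n - r) * fps_const (h (n - r))))"
  proof -
    have "?T3 = (\<Sum>r\<le>n. \<Sum>l\<le>n - r. fps_const (C r) * fps_X ^ r * KK * (fps_const (a l) * fps_const (h (n - l - r))))"
      by (rule tri_swap)
    also have "\<dots> = (\<Sum>r\<le>n. fps_const (C r) * fps_X ^ r * KK * (of_nat (n - r) * fps_const (h (n - r))))"
    proof (rule sum.cong[OF refl])
      fix r assume "r \<in> {..n}"
      have "(\<Sum>l\<le>n - r. fps_const (a l) * fps_const (h (n - l - r))) = fps_const (\<Sum>l\<le>n - r. a l * h (n - r - l))"
        by (simp add: fps_const_sum add.commute)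
      also have "\<dots> = of_nat (n - r) * fps_const (h (n - r))"
        unfolding hnewton[of "n - r", symmetric] by (simp flip: fps_of_nat)
      finally show "(\<Sum>l\<le>n - r. fps_const (C r) * fps_X ^ r * KK * (fps_const (a l) * fps_const (h (n - l - r))))
          = fps_const (C r) * fps_X ^ r * KK * (of_nat (n - r) * fps_const (h (n - r)))"
        by (simp flip: sum_distrib_left)
    qed
    finally show ?thesis .
  qed
  have A5: "?T4 = (\<Sum>s\<le>n. fps_const (of_nat s * C s) * fps_X ^ s * KK * fps_const (h (n - s)))"
  proof -
    have "?T4 = (\<Sum>s\<le>n. \<Sum>l\<le>s. fps_const (g l * C (s - l)) * fps_X ^ (l + (s - l)) * KK * fps_const (h (n - l - (s - l))))"
      by (rule tri_diag)
    also have "\<dots> = (\<Sum>s\<le>n. \<Sum>l\<le>s. fps_const (g l * C (s - l)) * fps_X ^ s * KK * fps_const (h (n - s)))"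
      by (intro sum.cong refl) auto
    also have "\<dots> = (\<Sum>s\<le>n. fps_const (of_nat s * C s) * fps_X ^ s * KK * fps_const (h (n - s)))"
      by (simp add: Cnewton fps_const_sum sum_distrib_right)
    finally show ?thesis .
  qed
  have A7: "(\<Sum>r\<le>n. fps_const (C r) * fps_X ^ r * KK * (of_nat (n - r) * fps_const (h (n - r))))
     + (\<Sum>r\<le>n. fps_const (of_nat r * C r) * fps_X ^ r * KK * fps_const (h (n - r)))
     = (\<Sum>r\<le>n. of_nat n * (fps_const (C r) * fps_X ^ r * KK * fps_const (h (n - r))))"
  proof (simp only: sum.distrib[symmetric], rule sum.cong[OF refl])
    fix r assume r: "r \<in> {..n}"
    have e: "(of_nat n :: 'a fps) = of_nat (n - r) + of_nat r" using r by (simp flip: of_nat_add)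
    show "fps_const (C r) * fps_X ^ r * KK * (of_nat (n - r) * fps_const (h (n - r)))
       + fps_const (of_nat r * C r) * fps_X ^ r * KK * fps_const (h (n - r))
       = of_nat n * (fps_const (C r) * fps_X ^ r * KK * fps_const (h (n - r)))"
    proof -
      let ?Z = "fps_const (C r) * fps_X ^ r * KK * fps_const (h (n - r))"
      have m1: "fps_const (C r) * fps_X ^ r * KK * (of_nat (n - r) * fps_const (h (n - r))) = of_nat (n - r) * ?Z"
        by (simp only: ofnat_mid mult.assoc)
      have c: "fps_const (of_nat r * C r) = (of_nat r :: 'a fps) * fps_const (C r)"
        by (simp flip: fps_of_nat)
      have m2: "fps_const (of_nat r * C r) * fps_X ^ r * KK * fps_const (h (n - r)) = of_nat r * ?Z"
        by (simp only: c mult.assoc)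
      show ?thesis by (simp only: m1 m2 e distrib_right)
    qed
  qed
  have A6: "of_nat n * Fn n = of_nat n * fps_const (h n) * KK
      - (\<Sum>r\<le>n. of_nat n * (fps_const (C r) * fps_X ^ r * KK * fps_const (h (n - r))))"
    by (simp add: Fn_def algebra_simps sum_distrib_left)
  have X: "(\<Sum>l\<le>n. fps_const (a l) * Fn (n - l)) = of_nat n * fps_const (h n) * KK
     - (?E + (\<Sum>r\<le>n. of_nat n * (fps_const (C r) * fps_X ^ r * KK * fps_const (h (n - r)))))"
    unfolding A1 A2 A3s A4 A5 A7[symmetric] by (simp only: add.assoc)
  show ?thesis by (rule comb_lemma[OF X A6])
qed

end


lemma gen_iff:
  assumes "\<And>n::nat. n \<ge> 1 \<Longrightarrow> X n = 0 \<longleftrightarrow> Q n" and "X 0 = 0"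
  shows "(\<forall>n\<ge>1. Q n) \<longleftrightarrow> (\<forall>n. X n = 0)"
proof
  assume "\<forall>n\<ge>1. Q n"
  then show "\<forall>n. X n = 0" using assms by (metis One_nat_def Suc_leI not_gr0)
next
  assume "\<forall>n. X n = 0"
  then show "\<forall>n\<ge>1. Q n" using assms by blast
qed

context core begin

lemma Fn0: "Fn 0 = 0"
  by (simp add: Fn_def h0 C0)

lemma En_0: "En 0 = 0"
  by (simp add: En_def a0 g0)

lemma Dn_0: "Dn 0 = 0"
  by (simp add: Dn_def a0)

lemma nz_fps: "m > 0 \<Longrightarrow> of_nat m * (f::'a fps) = 0 \<Longrightarrow> f = 0"
proof -
  assume m: "m > 0" and f: "of_nat m * f = 0"
  show "f = 0"
  proof (rule fps_ext)
    fix i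
    have "(of_nat m * f) $ i = of_nat m * f $ i" by (simp flip: fps_of_nat)
    then show "f $ i = 0 $ i" using f nz[OF m] by simp
  qed
qed

lemma key:
  assumes E: "\<And>l. l < n \<Longrightarrow> En l = 0" and F: "\<And>l. l < n \<Longrightarrow> Fn l = 0"
  shows "of_nat n * Fn n = En n"
proof -
  have s1: "(\<Sum>l\<le>n. fps_const (a l) * Fn (n - l)) = 0"
  proof (rule sum.neutral, rule ballI)
    fix l assume "l \<in> {..n}"
    then show "fps_const (a l) * Fn (n - l) = 0"
      using F[of "n - l"] a0 by (cases "l = 0") auto
  qed
  have s2: "(\<Sum>l\<le>n. \<Sum>r\<le>n - l. fps_const (C r) * fps_X ^ r * En l * fps_const (h (n - l - r))) = En n"
  proof (cases n)
    case 0
    then show ?thesis using En_0 by simp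
  next
    case (Suc n')
    have "(\<Sum>l\<le>n'. \<Sum>r\<le>n - l. fps_const (C r) * fps_X ^ r * En l * fps_const (h (n - l - r))) = 0"
      using E Suc by (intro sum.neutral) auto
    then show ?thesis using Suc by (simp add: C0 h0)
  qed
  show ?thesis using F_id[of n] s1 s2 by simp
qed

lemma E_iff_F: "(\<forall>l. En l = 0) \<longleftrightarrow> (\<forall>l. Fn l = 0)"
proof
  assume E: "\<forall>l. En l = 0"
  show "\<forall>l. Fn l = 0"
  proof
    fix n show "Fn n = 0"
    proof (induction n rule: less_induct)
      case (less n)
      show ?case
      proof (cases "n = 0")
        case True then show ?thesis by (simp add: Fn0)
      next
        case False
        have "of_nat n * Fn n = 0" using key[of n] E less by simp
        then show ?thesis using nz_fps False by blast
      qed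
    qed
  qed
next
  assume F: "\<forall>l. Fn l = 0"
  show "\<forall>l. En l = 0"
  proof
    fix n show "En n = 0"
    proof (induction n rule: less_induct)
      case (less n)
      show ?case using key[of n] F less by simp
    qed
  qed
qed

lemma Dn_iff:
  assumes "n \<ge> 1"
  shows "Dn n = 0 \<longleftrightarrow> (\<forall>m\<ge>1. a n * b m - b m * a n = (if n = m then of_nat n * g n else 0))"
proof -
  have c: "Dn n $ m = a n * b m - b m * a n - (if m = n then of_nat n * g n else 0)" for m
    by (simp add: Dn_def BB_def)
  show ?thesis
  proof
    assume "Dn n = 0"
    then show "\<forall>m\<ge>1. a n * b m - b m * a n = (if n = m then of_nat n * g n else 0)"
    proof (intro allI impI)
      fix m :: nat assume "m \<ge> 1"
      have "Dn n $ m = 0" using \<open>Dn n = 0\<close> by simp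
      then show "a n * b m - b m * a n = (if n = m then of_nat n * g n else 0)"
        using c[of m] by (simp add: eq_commute[of m n])
    qed
  next
    assume H: "\<forall>m\<ge>1. a n * b m - b m * a n = (if n = m then of_nat n * g n else 0)"
    show "Dn n = 0"
    proof (rule fps_ext)
      fix m
      show "Dn n $ m = 0 $ m"
      proof (cases "m = 0")
        case True then show ?thesis using c assms b0 by simp
      next
        case False then show ?thesis using c H by auto
      qed
    qed
  qed
qed

lemma Fn_nth: "Fn n $ m = h n * k m - (\<Sum>r=0..min n m. C r * k (m - r) * h (n - r))"
proof -
  have t: "(fps_const (C r) * fps_X ^ r * KK * fps_const (h (n - r))) $ m
      = (if m < r then 0 else C r * k (m - r) * h (n - r))" for r
  proof -
    have "(fps_const (C r) * fps_X ^ r * KK * fps_const (h (n - r))) $ m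
        = C r * (fps_X ^ r * KK) $ m * h (n - r)"
    proof -
      have "fps_const (C r) * fps_X ^ r * KK * fps_const (h (n - r)) = fps_const (C r) * (fps_X ^ r * KK) * fps_const (h (n - r))"
        by (simp only: mult.assoc)
      then show ?thesis by (simp del: fps_mult_left_const_nth add: fps_mult_left_const_nth[of "C r" "fps_X ^ r * KK"])
    qed
    then show ?thesis by (simp add: fps_X_power_mult_nth KK_def)
  qed
  have "(\<Sum>r\<le>n. (if m < r then 0 else C r * k (m - r) * h (n - r)))
      = (\<Sum>r\<in>{..n} \<inter> {r. r \<le> m}. C r * k (m - r) * h (n - r))"
    unfolding sum.inter_restrict[OF finite_atMost] by (rule sum.cong) auto
  also have "{..n} \<inter> {r. r \<le> m} = {0..min n m}" by auto
  finally have s: "(\<Sum>r\<le>n. (if m < r then 0 else C r * k (m - r) * h (n - r)))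
      = (\<Sum>r=0..min n m. C r * k (m - r) * h (n - r))" .
  have "Fn n $ m = (fps_const (h n) * KK) $ m - (\<Sum>r\<le>n. (fps_const (C r) * fps_X ^ r * KK * fps_const (h (n - r))) $ m)"
    by (simp only: Fn_def fps_sub_nth fps_sum_nth)
  also have "\<dots> = h n * k m - (\<Sum>r=0..min n m. C r * k (m - r) * h (n - r))"
    by (simp only: t s) (simp add: KK_def)
  finally show ?thesis .
qed

lemma Fn_iff: "Fn n = 0 \<longleftrightarrow> (\<forall>m\<ge>1. h n * k m = (\<Sum>r=0..min n m. C r * k (m - r) * h (n - r)))"
proof -
  have m0: "Fn n $ 0 = 0" by (simp add: Fn_nth C0 k0)
  show ?thesis
  proof
    assume "Fn n = 0"
    then show "\<forall>m\<ge>1. h n * k m = (\<Sum>r=0..min n m. C r * k (m - r) * h (n - r))"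
    proof (intro allI impI)
      fix m :: nat assume "m \<ge> 1"
      have "Fn n $ m = 0" using \<open>Fn n = 0\<close> by simp
      then show "h n * k m = (\<Sum>r=0..min n m. C r * k (m - r) * h (n - r))"
        using Fn_nth[of n m] by simp
    qed
  next
    assume H: "\<forall>m\<ge>1. h n * k m = (\<Sum>r=0..min n m. C r * k (m - r) * h (n - r))"
    show "Fn n = 0"
    proof (rule fps_ext)
      fix m
      show "Fn n $ m = 0 $ m"
        using m0 H Fn_nth[of n m] by (cases "m = 0") auto
    qed
  qed
qed

theorem core_equiv:
  "(\<forall>n\<ge>1. \<forall>m\<ge>1. a n * b m - b m * a n = (if n = m then of_nat n * g n else 0)) \<longleftrightarrow>
   (\<forall>n\<ge>1. \<forall>m\<ge>1. h n * k m = (\<Sum>r=0..min n m. C r * k (m - r) * h (n - r)))"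
proof -
  have "(\<forall>n\<ge>1. \<forall>m\<ge>1. a n * b m - b m * a n = (if n = m then of_nat n * g n else 0)) \<longleftrightarrow> (\<forall>n. Dn n = 0)"
    by (rule gen_iff[where X=Dn and Q="\<lambda>n. \<forall>m\<ge>1. a n * b m - b m * a n = (if n = m then of_nat n * g n else 0)", OF Dn_iff Dn_0])
  also have "\<dots> \<longleftrightarrow> (\<forall>n. En n = 0)" using D_iff_E by simp
  also have "\<dots> \<longleftrightarrow> (\<forall>n. Fn n = 0)" by (rule E_iff_F)
  also have "\<dots> \<longleftrightarrow> (\<forall>n\<ge>1. \<forall>m\<ge>1. h n * k m = (\<Sum>r=0..min n m. C r * k (m - r) * h (n - r)))"
    by (rule gen_iff[where X=Fn and Q="\<lambda>n. \<forall>m\<ge>1. h n * k m = (\<Sum>r=0..min n m. C r * k (m - r) * h (n - r))", OF Fn_iff Fn0, symmetric])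
  finally show ?thesis .
qed

end


declare hfun.simps[simp del]

function pfun :: "(nat \<Rightarrow> 'a::ring_1) \<Rightarrow> nat \<Rightarrow> 'a" where
  "pfun h n = (if n = 0 then 0 else of_nat n * h n - (\<Sum>l\<in>{1..<n}. pfun h l * h (n - l)))"
  by auto
termination by (relation "measure (\<lambda>(_, n). n)") auto

declare pfun.simps[simp del]

lemma pfun_0[simp]: "pfun h 0 = 0"
  by (subst pfun.simps) simp

lemma hfun_0[simp]: "hfun emb X 0 = 1"
  by (subst hfun.simps) simp

context
  fixes emb :: "'f::field_char_0 Fqpi \<Rightarrow> 'a::ring_1"
  assumes ca: "central_alg emb"
begin

lemma emb_1: "emb 1 = 1" using ca unfolding central_alg_def by blast
lemma emb_add: "emb (x + y) = emb x + emb y" using ca unfolding central_alg_def by blast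
lemma emb_mult: "emb (x * y) = emb x * emb y" using ca unfolding central_alg_def by blast
lemma emb_central: "emb x * z = z * emb x" using ca unfolding central_alg_def by blast

lemma emb_0: "emb 0 = 0"
  using emb_add[of 0 0] by simp

lemma emb_uminus: "emb (- x) = - emb x"
proof -
  have "emb x + emb (- x) = 0" using emb_add[of x "- x"] emb_0 by simp
  then have "- emb x = emb (- x)" by (rule minus_unique)
  then show ?thesis by simp
qed

lemma emb_diff: "emb (x - y) = emb x - emb y"
  using emb_add[of x "- y"] emb_uminus[of y] by simp

lemma emb_sum: "emb (sum f S) = (\<Sum>x\<in>S. emb (f x))"
  by (induction S rule: infinite_finite_induct) (simp_all add: emb_0 emb_add)

lemma emb_of_nat: "emb (of_nat n) = of_nat n"
  by (induction n) (simp_all add: emb_0 emb_add emb_1)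

lemma inv_single: "n > 0 \<Longrightarrow> emb (Poly_Mapping.single (0, 0) (inverse (of_nat n))) * of_nat n = 1"
proof -
  assume n: "n > 0"
  have z: "((0::int), (0::bit)) = 0" by (simp add: zero_prod_def)
  have "Poly_Mapping.single (0, 0) (inverse (of_nat n)) * (of_nat n :: 'f Fqpi) = 1"
  proof -
    have "Poly_Mapping.single (0, 0) (inverse (of_nat n)) * (of_nat n :: 'f Fqpi) = 
      Poly_Mapping.single (0, 0) (inverse (of_nat n)) * Poly_Mapping.single (0,0) (of_nat n :: 'f)" using z by simp
    also have "Poly_Mapping.single (0, 0) (inverse (of_nat n)) * Poly_Mapping.single (0,0) (of_nat n :: 'f)
        = Poly_Mapping.single ((0,0) + (0,0)) (inverse (of_nat n) * of_nat n)" by (rule mult_single)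
    also have "\<dots> = 1" using n by (simp add: zero_prod_def[symmetric])
    finally show ?thesis .
  qed
  then have "emb (Poly_Mapping.single (0, 0) (inverse (of_nat n)) * (of_nat n :: 'f Fqpi)) = 1" by (simp add: emb_1)
  then show ?thesis by (simp only: emb_mult emb_of_nat)
qed

lemma inv_single': "n > 0 \<Longrightarrow> of_nat n * emb (Poly_Mapping.single (0, 0) (inverse (of_nat n))) = 1"
  using inv_single by (simp add: mult_of_nat_commute)

lemma nz_emb: "m > 0 \<Longrightarrow> of_nat m * (x::'a) = 0 \<Longrightarrow> x = 0"
proof -
  assume m: "m > 0" and x: "of_nat m * x = 0"
  have "x = emb (Poly_Mapping.single (0, 0) (inverse (of_nat m))) * of_nat m * x"
    using inv_single[OF m] by simp
  also have "\<dots> = 0" using x by (simp add: mult.assoc)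
  finally show ?thesis .
qed

lemma hfun_newton:
  assumes X0: "X 0 = 0"
  shows "of_nat n * hfun emb X n = (\<Sum>l\<le>n. X l * hfun emb X (n - l))"
proof (cases "n = 0")
  case True then show ?thesis using X0 by simp
next
  case False
  have "of_nat n * hfun emb X n = of_nat n * emb (Poly_Mapping.single (0, 0) (inverse (of_nat n)))
      * (\<Sum>k\<in>{1..n}. X k * hfun emb X (n - k))"
    using False by (subst hfun.simps) (simp add: mult.assoc)
  also have "\<dots> = (\<Sum>k\<in>{1..n}. X k * hfun emb X (n - k))"
    using inv_single' False by simp
  also have "\<dots> = (\<Sum>l\<le>n. X l * hfun emb X (n - l))"
  proof -
    have "{..n} = insert 0 {1..n}" by auto
    then show ?thesis using X0 by simp
  qed
  finally show ?thesis .
qed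

lemma pfun_hfun:
  assumes X0: "X 0 = 0"
  shows "pfun (hfun emb X) n = X n"
proof (induction n rule: less_induct)
  case (less n)
  show ?case
  proof (cases "n = 0")
    case True then show ?thesis using X0 by simp
  next
    case False
    have "pfun (hfun emb X) n = of_nat n * hfun emb X n - (\<Sum>l\<in>{1..<n}. X l * hfun emb X (n - l))"
      using False less by (subst pfun.simps) simp
    also have "of_nat n * hfun emb X n = (\<Sum>l\<le>n. X l * hfun emb X (n - l))"
      by (rule hfun_newton) (rule X0)
    also have "{..n} = insert n (insert 0 {1..<n})" using False by auto
    finally show ?thesis using X0 False by simp
  qed
qed

lemma hfun_pfun:
  assumes h0: "h 0 = 1"
  shows "hfun emb (pfun h) n = h n"
proof (induction n rule: less_induct)
  case (less n)
  show ?case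
  proof (cases "n = 0")
    case True then show ?thesis using h0 by simp
  next
    case False
    have "hfun emb (pfun h) n = emb (Poly_Mapping.single (0, 0) (inverse (of_nat n)))
      * (\<Sum>k\<in>{1..n}. pfun h k * h (n - k))"
      using False less by (subst hfun.simps) simp
    also have "(\<Sum>k\<in>{1..n}. pfun h k * h (n - k)) = pfun h n + (\<Sum>k\<in>{1..<n}. pfun h k * h (n - k))"
    proof -
      have "{1..n} = insert n {1..<n}" using False by auto
      then show ?thesis using h0 by simp
    qed
    also have "\<dots> = of_nat n * h n"
      using False by (subst (1) pfun.simps) simp
    also have "emb (Poly_Mapping.single (0, 0) (inverse (of_nat n))) * (of_nat n * h n) = h n"
      using inv_single False by (simp flip: mult.assoc)
    finally show ?thesis .
  qed
qed

lemma hfun_comm: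
  assumes "\<And>l. z * Y l = Y l * z"
  shows "z * hfun emb Y m = hfun emb Y m * z"
proof (induction m rule: less_induct)
  case (less m)
  show ?case
  proof (cases "m = 0")
    case True then show ?thesis by simp
  next
    case False
    have s: "z * (\<Sum>k\<in>{1..m}. Y k * hfun emb Y (m - k)) = (\<Sum>k\<in>{1..m}. Y k * hfun emb Y (m - k)) * z"
      unfolding sum_distrib_left sum_distrib_right
    proof (rule sum.cong[OF refl])
      fix k assume "k \<in> {1..m}"
      then have "m - k < m" by auto
      then have ih: "z * hfun emb Y (m - k) = hfun emb Y (m - k) * z" using less by blast
      have "z * (Y k * hfun emb Y (m - k)) = (z * Y k) * hfun emb Y (m - k)" by (simp only: mult.assoc)
      also have "\<dots> = Y k * (z * hfun emb Y (m - k))" by (simp only: assms mult.assoc)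
      also have "\<dots> = Y k * hfun emb Y (m - k) * z" by (simp only: ih mult.assoc)
      finally show "z * (Y k * hfun emb Y (m - k)) = Y k * hfun emb Y (m - k) * z" .
    qed
    have "z * hfun emb Y m = z * emb (Poly_Mapping.single (0, 0) (inverse (of_nat m))) * (\<Sum>k\<in>{1..m}. Y k * hfun emb Y (m - k))"
      using False by (subst hfun.simps) (simp add: mult.assoc)
    also have "\<dots> = emb (Poly_Mapping.single (0, 0) (inverse (of_nat m))) * (z * (\<Sum>k\<in>{1..m}. Y k * hfun emb Y (m - k)))"
    proof -
      have "z * emb (Poly_Mapping.single (0, 0) (inverse (of_nat m))) = emb (Poly_Mapping.single (0, 0) (inverse (of_nat m))) * z"
        by (rule emb_central[symmetric])
      then show ?thesis by (simp only: mult.assoc[symmetric])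
    qed
    also have "\<dots> = emb (Poly_Mapping.single (0, 0) (inverse (of_nat m))) * (\<Sum>k\<in>{1..m}. Y k * hfun emb Y (m - k)) * z"
      by (simp only: s mult.assoc)
    also have "emb (Poly_Mapping.single (0, 0) (inverse (of_nat m))) * (\<Sum>k\<in>{1..m}. Y k * hfun emb Y (m - k)) = hfun emb Y m"
      using False by (subst (2) hfun.simps) simp
    finally show ?thesis .
  qed
qed

lemma hfun_comm2:
  assumes "\<And>k l. X k * Y l = Y l * X k"
  shows "hfun emb X n * hfun emb Y m = hfun emb Y m * hfun emb X n"
proof -
  have "Y l * hfun emb X n = hfun emb X n * Y l" for l
    by (rule hfun_comm) (simp add: assms)
  then show ?thesis by (intro hfun_comm) simp
qed

end

lemma pfun_comm:
  assumes "\<And>l. z * h l = h l * z"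
  shows "z * pfun h m = pfun h m * z"
proof (induction m rule: less_induct)
  case (less m)
  show ?case
  proof (cases "m = 0")
    case True then show ?thesis by simp
  next
    case False
    have s: "z * (\<Sum>l\<in>{1..<m}. pfun h l * h (m - l)) = (\<Sum>l\<in>{1..<m}. pfun h l * h (m - l)) * z"
      unfolding sum_distrib_left sum_distrib_right
    proof (rule sum.cong[OF refl])
      fix l assume "l \<in> {1..<m}"
      then have "l < m" by auto
      then have ih: "z * pfun h l = pfun h l * z" using less by blast
      have "z * (pfun h l * h (m - l)) = (z * pfun h l) * h (m - l)" by (simp only: mult.assoc)
      also have "\<dots> = pfun h l * (z * h (m - l))" by (simp only: ih mult.assoc)
      also have "\<dots> = pfun h l * h (m - l) * z" by (simp only: assms mult.assoc)
      finally show "z * (pfun h l * h (m - l)) = pfun h l * h (m - l) * z" .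
    qed
    have o: "z * (of_nat m * h m) = (of_nat m * h m) * z"
    proof -
      have "z * (of_nat m * h m) = (z * of_nat m) * h m" by (simp only: mult.assoc)
      also have "\<dots> = of_nat m * (z * h m)" by (simp only: mult_of_nat_commute mult.assoc)
      also have "\<dots> = (of_nat m * h m) * z" by (simp only: assms mult.assoc)
      finally show ?thesis .
    qed
    have p: "pfun h m = of_nat m * h m - (\<Sum>l\<in>{1..<m}. pfun h l * h (m - l))"
      using False by (subst pfun.simps) simp
    show ?thesis
      by (simp only: p right_diff_distrib left_diff_distrib o s)
  qed
qed

lemma pfun_comm2:
  assumes "\<And>k l. X k * Y l = Y l * X k"
  shows "pfun X n * pfun Y m = pfun Y m * pfun X n"
proof -
  have "Y l * pfun X n = pfun X n * Y l" for l
    by (rule pfun_comm) (simp add: assms)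
  then show ?thesis by (intro pfun_comm) simp
qed



type_synonym bv = "(int \<times> bit) \<times> nat"

definition symB :: "bv set \<Rightarrow> nat \<Rightarrow> bv multiset set" where
  "symB B r = {m. set_mset m \<subseteq> B \<and> size m = r \<and> (\<forall>b. snd (fst b) = 1 \<longrightarrow> count m b \<le> 1)}"

definition wt :: "bv multiset \<Rightarrow> 'f::comm_ring_1 Fqpi" where
  "wt m = Poly_Mapping.single (sum_mset (image_mset fst m)) 1"

definition gsF :: "bv set \<Rightarrow> nat \<Rightarrow> 'f::comm_ring_1 Fqpi" where
  "gsF B r = (\<Sum>m\<in>symB B r. wt m)"

definition xb :: "bv \<Rightarrow> 'f::comm_ring_1 Fqpi" where
  "xb b = Poly_Mapping.single (fst b) 1"

definition cb :: "bv \<Rightarrow> nat \<Rightarrow> 'f::comm_ring_1 Fqpi" where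
  "cb b j = (if snd (fst b) = 1 \<and> 2 \<le> j then 0 else xb b ^ j)"

lemma wt_add: "wt (m1 + m2) = wt m1 * wt m2"
  by (simp add: wt_def mult_single)

lemma wt_empty: "wt {#} = 1"
  by (simp add: wt_def)

lemma wt_rep: "wt (replicate_mset j b) = xb b ^ j"
proof (induction j)
  case 0 then show ?case by (simp add: wt_empty)
next
  case (Suc j)
  have e: "replicate_mset (Suc j) b = {#b#} + replicate_mset j b" by simp
  have w1: "wt {#b#} = xb b" by (simp add: wt_def xb_def)
  show ?case by (simp only: e wt_add w1 Suc.IH power_Suc)
qed

lemma symB_finite: assumes "finite B" shows "finite (symB B r)"
proof -
  have "symB B r \<subseteq> mset ` {xs. set xs \<subseteq> B \<and> length xs = r}"
  proof
    fix m assume "m \<in> symB B r"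
    moreover obtain xs where "mset xs = m" using ex_mset by blast
    ultimately show "m \<in> mset ` {xs. set xs \<subseteq> B \<and> length xs = r}"
      by (auto simp: symB_def)
  qed
  moreover have "finite (mset ` {xs. set xs \<subseteq> B \<and> length xs = r})"
    using finite_lists_length_eq[OF assms] by simp
  ultimately show ?thesis by (rule finite_subset)
qed

lemma gsF_empty: "gsF {} r = (if r = 0 then 1 else 0)"
proof -
  have "symB {} r = (if r = 0 then {{#}} else {})" by (auto simp: symB_def)
  then show ?thesis by (simp add: gsF_def wt_empty)
qed

lemma gsF_insert:
  assumes fin: "finite B" and bB: "b \<notin> B"
  shows "gsF (insert b B) r = (\<Sum>j=0..r. cb b j * gsF B (r - j))"
proof -
  define J where "J = {j \<in> {0..r}. snd (fst b) = 1 \<longrightarrow> j \<le> 1}"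
  define T where "T = Sigma J (\<lambda>j. symB B (r - j))"
  have "gsF (insert b B) r = (\<Sum>p\<in>T. wt (replicate_mset (fst p) b + snd p))"
    unfolding gsF_def
  proof (rule sum.reindex_bij_witness[where i="\<lambda>p. replicate_mset (fst p) b + snd p"
        and j="\<lambda>m. (count m b, filter_mset (\<lambda>x. x \<noteq> b) m)"])
    fix m assume m: "m \<in> symB (insert b B) r"
    show "replicate_mset (fst (count m b, filter_mset (\<lambda>x. x \<noteq> b) m)) b + snd (count m b, filter_mset (\<lambda>x. x \<noteq> b) m) = m"
      by (rule multiset_eqI) simp
    have sz: "size m = count m b + size (filter_mset (\<lambda>x. x \<noteq> b) m)"
    proof -
      have "m = filter_mset (\<lambda>x. x = b) m + filter_mset (\<lambda>x. \<not> x = b) m"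
        by (rule multiset_partition)
      then have "size m = size (filter_mset (\<lambda>x. x = b) m) + size (filter_mset (\<lambda>x. \<not> x = b) m)"
        by (metis size_union)
      then show ?thesis by (simp add: filter_eq_replicate_mset)
    qed
    have cb1: "snd (fst b) = 1 \<Longrightarrow> count m b \<le> 1" using m unfolding symB_def by blast
    show "(count m b, filter_mset (\<lambda>x. x \<noteq> b) m) \<in> T"
      using m sz cb1 count_le_size[of m b] unfolding T_def J_def symB_def by auto
    show "wt (replicate_mset (fst (count m b, filter_mset (\<lambda>x. x \<noteq> b) m)) b + snd (count m b, filter_mset (\<lambda>x. x \<noteq> b) m)) = wt m"
      by (rule arg_cong[where f=wt], rule multiset_eqI) simp
  next
    fix p assume p: "p \<in> T"
    obtain j m' where pj: "p = (j, m')" by (cases p)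
    have j: "j \<in> J" and m': "m' \<in> symB B (r - j)" using p pj by (auto simp: T_def)
    have c0: "count m' b = 0" using m' bB by (auto simp: symB_def count_eq_zero_iff)
    show "(count (replicate_mset (fst p) b + snd p) b, filter_mset (\<lambda>x. x \<noteq> b) (replicate_mset (fst p) b + snd p)) = p"
    proof -
      have "filter_mset (\<lambda>x. x \<noteq> b) (replicate_mset j b + m') = m'"
        by (rule multiset_eqI) (simp add: c0)
      then show ?thesis using pj c0 by simp
    qed
    show "replicate_mset (fst p) b + snd p \<in> symB (insert b B) r"
      using j m' pj c0 unfolding J_def symB_def by (auto split: if_splits)
  qed
  also have "\<dots> = (\<Sum>(j,m')\<in>T. xb b ^ j * wt m')"
    by (rule sum.cong[OF refl]) (auto simp: wt_add wt_rep)
  also have "\<dots> = (\<Sum>j\<in>J. \<Sum>m'\<in>symB B (r - j). xb b ^ j * wt m')"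
    unfolding T_def
    by (rule sum.Sigma[symmetric]) (auto simp: J_def symB_finite[OF fin])
  also have "\<dots> = (\<Sum>j\<in>J. xb b ^ j * gsF B (r - j))"
    by (simp add: gsF_def sum_distrib_left)
  also have "\<dots> = (\<Sum>j=0..r. cb b j * gsF B (r - j))"
  proof (rule sum.mono_neutral_cong_left)
    show "finite {0..r}" by simp
    show "J \<subseteq> {0..r}" by (auto simp: J_def)
    show "\<forall>j\<in>{0..r} - J. cb b j * gsF B (r - j) = 0" by (auto simp: J_def cb_def)
    show "\<And>j. j \<in> J \<Longrightarrow> xb b ^ j * gsF B (r - j) = cb b j * gsF B (r - j)" by (auto simp: J_def cb_def)
  qed
  finally show ?thesis .
qed



definition gb :: "bv \<Rightarrow> nat \<Rightarrow> 'f::comm_ring_1 Fqpi" where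
  "gb b l = (if l = 0 then 0 else if snd (fst b) = 1 then - ((- xb b) ^ l) else xb b ^ l)"

definition "CF B = Abs_fps (gsF B)"
definition "Cbf b = Abs_fps (cb b)"
definition "GF B = Abs_fps (\<lambda>l. \<Sum>b\<in>B. gb b l)"
definition "Gbf b = Abs_fps (gb b)"

lemma CF_insert: "finite B \<Longrightarrow> b \<notin> B \<Longrightarrow> CF (insert b B) = Cbf b * (CF B :: 'f::comm_ring_1 Fqpi fps)"
  by (rule fps_ext) (simp add: CF_def Cbf_def fps_mult_nth gsF_insert)

lemma CF_empty: "CF {} = (1 :: 'f::comm_ring_1 Fqpi fps)"
  by (rule fps_ext) (simp add: CF_def gsF_empty)

lemma GF_insert: "finite B \<Longrightarrow> b \<notin> B \<Longrightarrow> GF (insert b B) = Gbf b + (GF B :: 'f::comm_ring_1 Fqpi fps)"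
  by (rule fps_ext) (simp add: GF_def Gbf_def)

lemma GF_empty: "GF {} = (0 :: 'f::comm_ring_1 Fqpi fps)"
  by (rule fps_ext) (simp add: GF_def)

lemma sum_if0: "(\<Sum>i=0..r. if i = 0 then 0 else c) = of_nat r * (c::'a::comm_ring_1)"
  by (induction r) (simp_all add: algebra_simps)

lemma NN_Cbf: "NN (Cbf b) = Gbf b * (Cbf b :: 'f::comm_ring_1 Fqpi fps)"
proof (cases "snd (fst b) = 1")
  case True
  define x where "x = (xb b :: 'f Fqpi)"
  have C: "Cbf b = 1 + fps_const x * fps_X"
  proof (rule fps_ext)
    fix n
    show "Cbf b $ n = (1 + fps_const x * fps_X) $ n"
      by (cases "n = 0 \<or> n = 1") (auto simp: Cbf_def cb_def True x_def)
  qed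
  have N: "NN (1 + fps_const x * fps_X) = fps_const x * fps_X"
  proof -
    have x1: "NN (fps_X :: 'f Fqpi fps) = fps_X" using NN_X_power[of 1] by simp
    have o1: "NN (1 :: 'f Fqpi fps) = 0" by (rule fps_ext) simp
    show ?thesis by (simp add: NN_add NN_mult x1 o1)
  qed
  have G: "Gbf b * (1 + fps_const x * fps_X) = fps_const x * fps_X"
  proof (rule fps_ext)
    fix l
    have e: "Gbf b * (1 + fps_const x * fps_X) = Gbf b + fps_const x * (fps_X * Gbf b)"
      by (simp add: algebra_simps)
    show "(Gbf b * (1 + fps_const x * fps_X)) $ l = (fps_const x * fps_X) $ l"
    proof (cases l)
      case 0 then show ?thesis unfolding e by (simp add: Gbf_def gb_def)
    next
      case (Suc k)
      show ?thesis
      proof (cases k)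
        case 0 then show ?thesis using Suc unfolding e by (simp add: Gbf_def gb_def True x_def)
      next
        case (Suc k')
        then show ?thesis using \<open>l = Suc k\<close> unfolding e
          by (simp add: Gbf_def gb_def True x_def fps_mult_fps_X_commute[symmetric])
      qed
    qed
  qed
  show ?thesis unfolding C N G ..
next
  case False
  show ?thesis
  proof (rule fps_ext)
    fix r
    have "(Gbf b * Cbf b) $ r = (\<Sum>i=0..r. gb b i * (cb b (r - i) :: 'f Fqpi))"
      by (simp add: fps_mult_nth Gbf_def Cbf_def)
    also have "\<dots> = (\<Sum>i=0..r. if i = 0 then 0 else xb b ^ r)"
    proof (rule sum.cong[OF refl])
      fix i assume "i \<in> {0..r}"
      then have "xb b ^ i * xb b ^ (r - i) = (xb b ^ r :: 'f Fqpi)" by (simp flip: power_add)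
      then show "gb b i * cb b (r - i) = (if i = 0 then 0 else (xb b ^ r :: 'f Fqpi))"
        using False by (simp add: gb_def cb_def)
    qed
    also have "\<dots> = of_nat r * xb b ^ r" by (rule sum_if0)
    finally show "NN (Cbf b :: 'f Fqpi fps) $ r = (Gbf b * Cbf b) $ r"
      using False by (simp add: Cbf_def cb_def)
  qed
qed

lemma NN_CF: "finite B \<Longrightarrow> NN (CF B) = GF B * (CF B :: 'f::comm_ring_1 Fqpi fps)"
proof (induction B rule: finite_induct)
  case empty
  then show ?case by (simp add: CF_empty GF_empty flip: fps_const_1_eq_1)
next
  case (insert b B)
  have "NN (CF (insert b B)) = NN (Cbf b * (CF B :: 'f Fqpi fps))" using insert by (simp add: CF_insert)
  also have "\<dots> = NN (Cbf b) * CF B + Cbf b * NN (CF B)" by (rule NN_mult)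
  also have "\<dots> = Gbf b * Cbf b * CF B + Cbf b * (GF B * CF B)"
    by (simp only: NN_Cbf insert.IH)
  also have "\<dots> = (Gbf b + GF B) * (Cbf b * CF B)" by (simp add: algebra_simps)
  also have "\<dots> = GF (insert b B) * CF (insert b B)" using insert by (simp add: CF_insert GF_insert)
  finally show ?case .
qed

lemma gsF_newton:
  assumes "finite B"
  shows "of_nat r * (gsF B r :: 'f::comm_ring_1 Fqpi) = (\<Sum>i=0..r. (\<Sum>b\<in>B. gb b i) * gsF B (r - i))"
  using arg_cong[OF NN_CF[OF assms], of "\<lambda>f. f $ r"]
  by (simp add: CF_def GF_def fps_mult_nth)



lemma lookup_toF: "Poly_Mapping.lookup (toF c :: 'f::ring_1 Fqpi) k = of_int (Poly_Mapping.lookup c k)"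
  by (simp add: toF_def Poly_Mapping.map.rep_eq when_def)

lemma toF_add: "(toF (a + b) :: 'f::ring_1 Fqpi) = toF a + toF b"
  by (rule poly_mapping_eqI) (simp add: lookup_toF lookup_add)

lemma toF_0: "(toF 0 :: 'f::ring_1 Fqpi) = 0"
  by (rule poly_mapping_eqI) (simp add: lookup_toF)

lemma toF_sum: "(toF (sum f S) :: 'f::ring_1 Fqpi) = (\<Sum>x\<in>S. toF (f x))"
  by (induction S rule: infinite_finite_induct) (simp_all add: toF_0 toF_add)

lemma toF_single1: "(toF (Poly_Mapping.single k 1) :: 'f::ring_1 Fqpi) = Poly_Mapping.single k 1"
  by (simp add: toF_def)

lemma toF_1: "(toF 1 :: 'f::ring_1 Fqpi) = 1"
  using toF_single1[of 0] by simp

lemma sbasis_finite: "finite (sbasis d)"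
proof -
  have "sbasis d \<subseteq> (\<Union>k\<in>Poly_Mapping.keys d. {k} \<times> {..<Poly_Mapping.lookup d k})"
    by (auto simp: sbasis_def in_keys_iff)
  moreover have "finite (\<Union>k\<in>Poly_Mapping.keys d. {k} \<times> {..<Poly_Mapping.lookup d k})" by simp
  ultimately show ?thesis by (rule finite_subset)
qed

lemma toF_grdim_sym: "(toF (grdim_sym d r) :: 'f::comm_ring_1 Fqpi) = gsF (sbasis d) r"
  by (simp add: grdim_sym_def sym_basis_def symB_def gsF_def wt_def toF_sum toF_single1)

lemma toF_grdim: "(toF (grdim d) :: 'f::comm_ring_1 Fqpi) = (\<Sum>b\<in>sbasis d. xb b)"
  by (simp add: grdim_def qmon_def xb_def toF_sum toF_single1)

lemma grdim_sym_0: "grdim_sym d 0 = 1"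
proof -
  have "sym_basis d 0 = {{#}}" by (auto simp: sym_basis_def)
  then show ?thesis by (simp add: grdim_sym_def)
qed

lemma single001: "(Poly_Mapping.single (0, 0) 1 :: 'f::comm_ring_1 Fqpi) = 1"
  by (simp add: zero_prod_def[symmetric])

definition phi :: "nat \<Rightarrow> int \<times> bit \<Rightarrow> 'f::comm_ring_1 Fqpi" where
  "phi n k = qmon (int n * fst k) 0 * (- ((- piF) ^ n)) ^ (if snd k = 1 then 1 else 0)"

lemma theta_alt:
  assumes "finite S" "Poly_Mapping.keys c \<subseteq> S"
  shows "theta n c = (\<Sum>k\<in>S. Poly_Mapping.single (0, 0) (Poly_Mapping.lookup c k) * phi n k)"
  unfolding theta_def phi_def mult.assoc
  by (rule sum.mono_neutral_left) (use assms in \<open>auto simp: in_keys_iff mult.assoc\<close>)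

lemma theta_add: "theta n (a + b) = theta n a + theta n (b :: 'f::comm_ring_1 Fqpi)"
proof -
  let ?S = "Poly_Mapping.keys a \<union> Poly_Mapping.keys b"
  have f: "finite ?S" by simp
  have "theta n (a + b) = (\<Sum>k\<in>?S. Poly_Mapping.single (0, 0) (Poly_Mapping.lookup (a + b) k) * phi n k)"
    by (rule theta_alt[OF f]) (rule keys_add)
  also have "\<dots> = (\<Sum>k\<in>?S. Poly_Mapping.single (0, 0) (Poly_Mapping.lookup a k) * phi n k)
      + (\<Sum>k\<in>?S. Poly_Mapping.single (0, 0) (Poly_Mapping.lookup b k) * phi n k)"
    by (simp add: lookup_add single_add distrib_right sum.distrib)
  also have "\<dots> = theta n a + theta n b"
    by (simp add: theta_alt[OF f])
  finally show ?thesis .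
qed

lemma theta_0: "theta n (0 :: 'f::comm_ring_1 Fqpi) = 0"
  by (simp add: theta_def)

lemma theta_sum: "theta n (sum f S) = (\<Sum>x\<in>S. theta n (f x :: 'f::comm_ring_1 Fqpi))"
  by (induction S rule: infinite_finite_induct) (simp_all add: theta_0 theta_add)

lemma qmon_pow: "(qmon s 0 :: 'f::comm_ring_1 Fqpi) ^ n = qmon (int n * s) 0"
  by (induction n) (simp_all add: qmon_def mult_single algebra_simps single001)

lemma theta_xb: "theta n (xb b :: 'f::comm_ring_1 Fqpi) = (if snd (fst b) = 1 then - ((- xb b) ^ n) else xb b ^ n)"
proof -
  obtain s e where b: "fst b = (s, e)" by (cases "fst b")
  have "theta n (xb b :: 'f Fqpi) = phi n (s, e)"
    by (simp add: theta_def xb_def b phi_def single001)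
  also have "\<dots> = (if snd (fst b) = 1 then - ((- xb b) ^ n) else xb b ^ n)"
  proof (cases "e = 1")
    case True
    have x: "(xb b :: 'f Fqpi) = qmon s 0 * piF"
      by (simp add: xb_def b True piF_def qmon_def mult_single)
    have m: "- (qmon s 0 * piF) = (qmon s 0 :: 'f Fqpi) * (- piF)" by simp
    have p: "(- (xb b)) ^ n = qmon (int n * s) 0 * ((- piF) ^ n :: 'f Fqpi)"
      unfolding x m power_mult_distrib qmon_pow ..
    show ?thesis using True b by (simp add: phi_def p)
  next
    case False
    then have e0: "e = 0" by simp
    have x: "(xb b :: 'f Fqpi) = qmon s 0"
      by (simp add: xb_def b e0 qmon_def)
    show ?thesis using False b by (simp add: phi_def x qmon_pow)
  qed
  finally show ?thesis .
qed

lemma comb_newton: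
  "of_nat r * (toF (grdim_sym d r) :: 'f::comm_ring_1 Fqpi) =
   (\<Sum>l\<le>r. (if l = 0 then 0 else theta l (toF (grdim d))) * toF (grdim_sym d (r - l)))"
proof -
  have g: "(\<Sum>b\<in>sbasis d. gb b l) = (if l = 0 then 0 else theta l (toF (grdim d) :: 'f Fqpi))" for l
    by (simp add: toF_grdim theta_sum theta_xb gb_def)
  show ?thesis
    using gsF_newton[OF sbasis_finite, of r d, where 'f='f]
    by (simp add: toF_grdim_sym g atLeast0AtMost)
qed

context
  fixes emb :: "'f::field_char_0 Fqpi \<Rightarrow> 'a::ring_1"
  assumes ca: "central_alg emb"
begin

lemma core_inst:
  assumes a0: "a 0 = 0" and b0: "b 0 = 0"
  shows "core a b (\<lambda>r. emb (toF (grdim_sym d r)))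
     (\<lambda>l. if l = 0 then 0 else emb (theta l (toF (grdim d)))) (hfun emb a) (hfun emb b)"
proof
  show "a 0 = 0" "b 0 = 0" by (fact a0, fact b0)
  show "(if 0 = 0 then 0 else emb (theta 0 (toF (grdim d)))) = (0::'a)" by simp
  show "emb (toF (grdim_sym d 0)) = 1" by (simp add: grdim_sym_0 toF_1 emb_1[OF ca])
  show "hfun emb a 0 = 1" "hfun emb b 0 = 1" by simp_all
  show "emb (toF (grdim_sym d r)) * x = x * emb (toF (grdim_sym d r))" for r x
    by (rule emb_central[OF ca])
  show "(if l = 0 then 0 else emb (theta l (toF (grdim d)))) * x = x * (if l = 0 then 0 else emb (theta l (toF (grdim d))))" for l x
    by (cases "l = 0") (simp_all, rule emb_central[OF ca])
  show "of_nat n * hfun emb a n = (\<Sum>l\<le>n. a l * hfun emb a (n - l))" for n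
    by (rule hfun_newton[OF ca]) (rule a0)
  show "of_nat n * hfun emb b n = (\<Sum>l\<le>n. b l * hfun emb b (n - l))" for n
    by (rule hfun_newton[OF ca]) (rule b0)
  show "m > 0 \<Longrightarrow> of_nat m * x = 0 \<Longrightarrow> x = 0" for m and x :: 'a
    by (rule nz_emb[OF ca])
  show "of_nat r * emb (toF (grdim_sym d r)) =
     (\<Sum>l\<le>r. (if l = 0 then 0 else emb (theta l (toF (grdim d)))) * emb (toF (grdim_sym d (r - l))))" for r
  proof -
    have "of_nat r * emb (toF (grdim_sym d r)) = emb (of_nat r * toF (grdim_sym d r))"
      by (simp add: emb_mult[OF ca] emb_of_nat[OF ca])
    also have "\<dots> = emb (\<Sum>l\<le>r. (if l = 0 then 0 else theta l (toF (grdim d))) * toF (grdim_sym d (r - l)))"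
      by (simp only: comb_newton)
    also have "\<dots> = (\<Sum>l\<le>r. (if l = 0 then 0 else emb (theta l (toF (grdim d)))) * emb (toF (grdim_sym d (r - l))))"
      by (simp add: emb_sum[OF ca] emb_mult[OF ca]) (intro sum.cong refl, simp add: emb_0[OF ca])
    finally show ?thesis .
  qed
qed

end

theorem propositionA1:
  fixes G :: "'i \<Rightarrow> 'i \<Rightarrow> Zqpi"
    and V :: "'i \<Rightarrow> 'i \<Rightarrow> sdim"
    and emb :: "'f::field_char_0 Fqpi \<Rightarrow> 'a::ring_1"
  assumes "alg_closed TYPE('f)"
    and "symmetric_form G"
    and "nondegenerate_form G"
    and "\<And>i j. grdim (V i j) = G i j"
    and "central_alg emb"
  shows "bij_betw (p_to_h emb) {P. heis_rel emb G P} {H. hrel emb V H}"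
proof -
  note ca = assms(5)
  note GV = assms(4)[symmetric]
  have cross: "(\<forall>n\<ge>1. \<forall>m\<ge>1. P True n i * P False m j - P False m j * P True n i =
        (if n = m then emb (of_nat n * theta n (toF (G i j))) else 0))
     \<longleftrightarrow> (\<forall>n\<ge>1. \<forall>m\<ge>1. hfun emb (\<lambda>k. P True k i) n * hfun emb (\<lambda>k. P False k j) m =
        (\<Sum>r=0..min n m. emb (toF (grdim_sym (V i j) r)) * hfun emb (\<lambda>k. P False k j) (m - r) * hfun emb (\<lambda>k. P True k i) (n - r)))"
    if "P True 0 i = 0" "P False 0 j = 0" for P :: "bool \<Rightarrow> nat \<Rightarrow> 'i \<Rightarrow> 'a" and i j
  proof -
    interpret c: core "\<lambda>k. P True k i" "\<lambda>k. P False k j" "\<lambda>r. emb (toF (grdim_sym (V i j) r))"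
      "\<lambda>l. if l = 0 then 0 else emb (theta l (toF (grdim (V i j))))"
      "hfun emb (\<lambda>k. P True k i)" "hfun emb (\<lambda>k. P False k j)"
      by (rule core_inst[OF ca]) (simp_all add: that)
    have e: "(if n = m then emb (of_nat n * theta n (toF (G i j))) else 0) =
       (if n = m then of_nat n * (if n = 0 then 0 else emb (theta n (toF (grdim (V i j))))) else 0)"
      if "n \<ge> 1" for n m :: nat
      using that by (simp add: GV emb_mult[OF ca] emb_of_nat[OF ca])
    show ?thesis using c.core_equiv e by simp
  qed
  show ?thesis
  proof (rule bij_betw_imageI)
    show "inj_on (p_to_h emb) {P. heis_rel emb G P}"
    proof (rule inj_onI)
      fix P Q assume P: "P \<in> {P. heis_rel emb G P}" and Q: "Q \<in> {P. heis_rel emb G P}"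
        and eq: "p_to_h emb P = p_to_h emb Q"
      show "P = Q"
      proof (intro ext)
        fix s n i
        have P0: "P s 0 i = 0" and Q0: "Q s 0 i = 0" using P Q by (simp_all add: heis_rel_def)
        have "hfun emb (\<lambda>k. P s k i) m = hfun emb (\<lambda>k. Q s k i) m" for m
          using fun_cong[OF fun_cong[OF fun_cong[OF eq, of s], of m], of i] by (simp add: p_to_h_def)
        then have "hfun emb (\<lambda>k. P s k i) = hfun emb (\<lambda>k. Q s k i)" by (rule ext)
        then have "pfun (hfun emb (\<lambda>k. P s k i)) n = pfun (hfun emb (\<lambda>k. Q s k i)) n" by simp
        then show "P s n i = Q s n i"
          using pfun_hfun[OF ca, of "\<lambda>k. P s k i" n] pfun_hfun[OF ca, of "\<lambda>k. Q s k i" n] P0 Q0 by simp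
      qed
    qed
    show "p_to_h emb ` {P. heis_rel emb G P} = {H. hrel emb V H}"
    proof
      show "p_to_h emb ` {P. heis_rel emb G P} \<subseteq> {H. hrel emb V H}"
      proof
        fix H assume "H \<in> p_to_h emb ` {P. heis_rel emb G P}"
        then obtain P where P: "heis_rel emb G P" and H: "H = p_to_h emb P" by blast
        have P0: "\<And>s i. P s 0 i = 0" using P by (simp add: heis_rel_def)
        have Pc: "P s k i * P s l j = P s l j * P s k i" for s k l i j
        proof (cases "k = 0 \<or> l = 0")
          case True then show ?thesis using P0 by auto
        next
          case False then have "k \<ge> 1" "l \<ge> 1" by auto
          then show ?thesis using P unfolding heis_rel_def by blast
        qed
        have "hrel emb V (p_to_h emb P)"
          unfolding hrel_def p_to_h_def
        proof (intro conjI allI impI)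
          show "hfun emb (\<lambda>k. P s k i) 0 = 1" for s i by simp
          show "hfun emb (\<lambda>k. P s k i) n * hfun emb (\<lambda>k. P s k j) m = hfun emb (\<lambda>k. P s k j) m * hfun emb (\<lambda>k. P s k i) n"
            for s n m i j by (rule hfun_comm2[OF ca]) (rule Pc)
          fix n m :: nat and i j assume n: "1 \<le> n" and m: "1 \<le> m"
          have "\<forall>n\<ge>1. \<forall>m\<ge>1. P True n i * P False m j - P False m j * P True n i =
              (if n = m then emb (of_nat n * theta n (toF (G i j))) else 0)"
            using P unfolding heis_rel_def by blast
          then show "hfun emb (\<lambda>k. P True k i) n * hfun emb (\<lambda>k. P False k j) m =
              (\<Sum>r = 0..min n m. emb (toF (grdim_sym (V i j) r)) * hfun emb (\<lambda>k. P False k j) (m - r) * hfun emb (\<lambda>k. P True k i) (n - r))"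
            using cross[of P i j] P0 n m by blast
        qed
        then show "H \<in> {H. hrel emb V H}" using H by simp
      qed
    next
      show "{H. hrel emb V H} \<subseteq> p_to_h emb ` {P. heis_rel emb G P}"
      proof
        fix H assume "H \<in> {H. hrel emb V H}"
        then have H: "hrel emb V H" by simp
        have H0: "\<And>s i. H s 0 i = 1" using H by (simp add: hrel_def)
        have Hc: "H s k i * H s l j = H s l j * H s k i" for s k l i j
        proof (cases "k = 0 \<or> l = 0")
          case True then show ?thesis using H0 by auto
        next
          case False then have "k \<ge> 1" "l \<ge> 1" by auto
          then show ?thesis using H unfolding hrel_def by blast
        qed
        define P where "P = (\<lambda>s n i. pfun (\<lambda>k. H s k i) n)"
        have hP: "hfun emb (\<lambda>k. P s k i) = (\<lambda>n. H s n i)" for s i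
          unfolding P_def using hfun_pfun[OF ca, of "\<lambda>k. H s k i"] H0 by auto
        have "H = p_to_h emb P"
          by (intro ext) (simp add: p_to_h_def hP)
        moreover have "heis_rel emb G P"
          unfolding heis_rel_def
        proof (intro conjI allI impI)
          show "P s 0 i = 0" for s i by (simp add: P_def)
          show "P s n i * P s m j = P s m j * P s n i" for s n m i j
            unfolding P_def by (rule pfun_comm2) (rule Hc)
          fix n m :: nat and i j assume n: "1 \<le> n" and m: "1 \<le> m"
          have "\<forall>n\<ge>1. \<forall>m\<ge>1. H True n i * H False m j =
             (\<Sum>r = 0..min n m. emb (toF (grdim_sym (V i j) r)) * H False (m - r) j * H True (n - r) i)"
            using H unfolding hrel_def by blast
          then have "\<forall>n\<ge>1. \<forall>m\<ge>1. hfun emb (\<lambda>k. P True k i) n * hfun emb (\<lambda>k. P False k j) m =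
              (\<Sum>r=0..min n m. emb (toF (grdim_sym (V i j) r)) * hfun emb (\<lambda>k. P False k j) (m - r) * hfun emb (\<lambda>k. P True k i) (n - r))"
            by (simp add: hP)
          then show "P True n i * P False m j - P False m j * P True n i =
              (if n = m then emb (of_nat n * theta n (toF (G i j))) else 0)"
            using cross[of P i j] n m by (simp add: P_def)
        qed
        ultimately show "H \<in> p_to_h emb ` {P. heis_rel emb G P}" by blast
      qed
    qed
  qed
qed


end
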